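(* Suppose $P$ has a positive real eigenvalue different from $1$, and let $\theta$ be the largest positive real eigenvalue of $P$ different from $1$. Then for every allowed word $u$ of $\Sigma_A$, the escape rate into the cylinder $C_u$ satisfies $0<\rho(C_u)\le-\ln\theta$.
   Context: Let $\Sigma=\{1,\dots,N\}$, $A$ an irreducible $N\times N$ $0$–$1$ matrix, $\Sigma_A=\{x\in\Sigma^{\mathbb N}:A_{x_nx_{n+1}}=1\ \forall n\}$ with left shift $\sigma$. A word is allowed if it occurs in some element of $\Sigma_A$; $C_u$ is the set of $x\in\Sigma_A$ beginning with $u$. $P$ is a row-stochastic matrix with $P_{ij}>0$ iff $A_{ij}=1$, $\mathbf p$ its stationary vector, $\mu=\mu_P$ the Markov measure $\mu(C_w)=p_{w_1}P_{w_1w_2}\cdots P_{w_{n-1}w_n}$. For a hole $H\subseteq\Sigma_A$, $\mathcal W_m=\{x:\sigma^ix\notin H,0\le i\le m\}$ and $\rho(H)=-\lim_m\frac1m\ln\mu(\mathcal W_m)$. *)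

theory Defs
  imports "HOL-Analysis.Analysis" "HOL-Probability.Probability"
begin

text \<open>The alphabet \<Sigma> = {1..N} is modelled by a finite type 'n; points of the
full shift are sequences x :: nat \<Rightarrow> 'n; words are lists.\<close>

definition mat_power :: "real^'n^'n \<Rightarrow> nat \<Rightarrow> real^'n^'n" where
  "mat_power A k = ((\<lambda>B. B ** A) ^^ k) (mat 1)"

definition zero_one_matrix :: "real^'n^'n \<Rightarrow> bool" where
  "zero_one_matrix A \<longleftrightarrow> (\<forall>i j. A$i$j = 0 \<or> A$i$j = 1)"

definition irreducible_matrix :: "real^'n^'n \<Rightarrow> bool" where
  "irreducible_matrix A \<longleftrightarrow> (\<forall>i j. \<exists>k>0. mat_power A k $i$j > 0)"

definition shift_space :: "real^'n^'n \<Rightarrow> (nat \<Rightarrow> 'n) set" where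
  "shift_space A = {x. \<forall>n. A $ x n $ x (Suc n) = 1}"

definition shift :: "(nat \<Rightarrow> 'n) \<Rightarrow> (nat \<Rightarrow> 'n)" where
  "shift x = (\<lambda>n. x (Suc n))"

definition allowed_word :: "real^'n^'n \<Rightarrow> 'n list \<Rightarrow> bool" where
  "allowed_word A w \<longleftrightarrow> (\<exists>x\<in>shift_space A. \<exists>k. \<forall>i<length w. x (k + i) = w ! i)"

definition cylinder :: "real^'n^'n \<Rightarrow> 'n list \<Rightarrow> (nat \<Rightarrow> 'n) set" where
  "cylinder A w = {x \<in> shift_space A. \<forall>i<length w. x i = w ! i}"

definition row_stochastic :: "real^'n^'n \<Rightarrow> bool" where
  "row_stochastic P \<longleftrightarrow> (\<forall>i j. P$i$j \<ge> 0) \<and> (\<forall>i. (\<Sum>j\<in>UNIV. P$i$j) = 1)"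

definition stationary_vector :: "real^'n^'n \<Rightarrow> real^'n \<Rightarrow> bool" where
  "stationary_vector P p \<longleftrightarrow> (\<forall>i. p$i \<ge> 0) \<and> (\<Sum>i\<in>UNIV. p$i) = 1 \<and> p v* P = p"

text \<open>Markov measure of the cylinder of a (nonempty) word w.\<close>
definition markov_weight :: "real^'n^'n \<Rightarrow> real^'n \<Rightarrow> 'n list \<Rightarrow> real" where
  "markov_weight P p w = p $ (w ! 0) * (\<Prod>i<length w - 1. P $ (w ! i) $ (w ! Suc i))"

definition is_markov_measure ::
  "real^'n^'n \<Rightarrow> real^'n^'n \<Rightarrow> real^'n \<Rightarrow> (nat \<Rightarrow> 'n) measure \<Rightarrow> bool" where
  "is_markov_measure A P p \<mu> \<longleftrightarrow>
     prob_space \<mu> \<and>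
     sets \<mu> = sets (Pi\<^sub>M UNIV (\<lambda>_. count_space UNIV)) \<and>
     (\<forall>w. w \<noteq> [] \<and> allowed_word A w \<longrightarrow> measure \<mu> (cylinder A w) = markov_weight P p w)"

definition survivors :: "(nat \<Rightarrow> 'n) set \<Rightarrow> nat \<Rightarrow> (nat \<Rightarrow> 'n) set" where
  "survivors H m = {x. \<forall>i\<le>m. (shift ^^ i) x \<notin> H}"

definition real_eigenvalue :: "real^'n^'n \<Rightarrow> real \<Rightarrow> bool" where
  "real_eigenvalue P t \<longleftrightarrow> (\<exists>v. v \<noteq> 0 \<and> P *v v = t *\<^sub>R v)"

end

theory Submission
  imports Defs
begin


definition lsum :: "nat \<Rightarrow> ('n::finite list \<Rightarrow> real) \<Rightarrow> real" where
  "lsum n f = (\<Sum>w\<in>{w. length w = n}. f w)"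

lemma finite_len: "finite {w::'n::finite list. length w = n}"
  using finite_lists_length_eq[of "UNIV::'n set" n] by simp

lemma lsum_0[simp]: "lsum 0 f = f []"
  by (simp add: lsum_def)

lemma lsum_Suc: "lsum (Suc n) f = (\<Sum>a\<in>UNIV. lsum n (\<lambda>w. f (a # w)))"
proof -
  have e: "{w::'a list. length w = Suc n} = (\<lambda>(xs, n). n # xs) ` ({xs. length xs = n} \<times> UNIV)"
    using lists_length_Suc_eq[of "UNIV::'a set" n] by simp
  have inj: "inj_on (\<lambda>(xs, n). n # xs) ({xs::'a list. length xs = n} \<times> UNIV)"
    by (auto simp: inj_on_def)
  have "lsum (Suc n) f = (\<Sum>(xs,a)\<in>{xs::'a list. length xs = n} \<times> UNIV. f (a # xs))"
    unfolding lsum_def e by (subst sum.reindex[OF inj]) (simp add: case_prod_unfold)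
  also have "\<dots> = (\<Sum>xs\<in>{xs::'a list. length xs = n}. \<Sum>a\<in>UNIV. f (a # xs))"
    by (rule sum.cartesian_product[symmetric])
  also have "\<dots> = (\<Sum>a\<in>UNIV. \<Sum>xs\<in>{xs::'a list. length xs = n}. f (a # xs))"
    by (rule sum.swap)
  finally show ?thesis by (simp add: lsum_def)
qed

lemma lsum_append: "lsum (m + n) f = lsum m (\<lambda>a. lsum n (\<lambda>b. f (a @ b)))"
proof (induction m arbitrary: f)
  case 0 then show ?case by simp
next
  case (Suc m)
  show ?case using Suc[of "\<lambda>w. f (_ # w)"] by (simp add: lsum_Suc)
qed

lemma lsum_mono: "(\<And>w. length w = n \<Longrightarrow> f w \<le> g w) \<Longrightarrow> lsum n f \<le> lsum n g"
  unfolding lsum_def by (rule sum_mono) auto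

lemma lsum_nonneg: "(\<And>w. length w = n \<Longrightarrow> 0 \<le> f w) \<Longrightarrow> 0 \<le> lsum n f"
  unfolding lsum_def by (rule sum_nonneg) auto

lemma lsum_cmult: "lsum n (\<lambda>w. c * f w) = c * lsum n f"
  unfolding lsum_def by (simp add: sum_distrib_left)

lemma lsum_diff: "lsum n (\<lambda>w. f w - g w) = lsum n f - lsum n g"
  unfolding lsum_def by (simp add: sum_subtractf)

lemma lsum_delta: "length c = n \<Longrightarrow> lsum n (\<lambda>a. if a = c then h a else 0) = h c"
  unfolding lsum_def by (simp add: finite_len)

fun tw :: "real^'n^'n \<Rightarrow> 'n list \<Rightarrow> real" where
  "tw P (a # b # w) = P$a$b * tw P (b # w)"
| "tw P _ = 1"

lemma tw_nonneg: "\<forall>i j. P$i$j \<ge> 0 \<Longrightarrow> tw P w \<ge> 0"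
  by (induction P w rule: tw.induct) auto

lemma tw_append: "a \<noteq> [] \<Longrightarrow> b \<noteq> [] \<Longrightarrow> tw P (a @ b) = tw P a * P$(last a)$(hd b) * tw P b"
proof (induction P a rule: tw.induct)
  case (1 P x y w) then show ?case by simp
next
  case ("2_1" P) then show ?case by simp
next
  case ("2_2" P v) then show ?case by (cases b) auto
qed

lemma tw_prod: "(\<Prod>i<length w - 1. P $ (w ! i) $ (w ! Suc i)) = tw P w"
proof (induction P w rule: tw.induct)
  case (1 P a b w)
  have "(\<Prod>i<length (a # b # w) - 1. P $ ((a # b # w) ! i) $ ((a # b # w) ! Suc i))
      = (\<Prod>i<Suc (length (b#w) - 1). P $ ((a # b # w) ! i) $ ((a # b # w) ! Suc i))" by simp
  also have "\<dots> = P$a$b * (\<Prod>i<length (b#w) - 1. P $ ((b # w) ! i) $ ((b # w) ! Suc i))"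
    by (subst prod.lessThan_Suc_shift) simp
  finally show ?case using 1 by simp
qed auto



lemma rs_nonneg: "row_stochastic P \<Longrightarrow> P$i$j \<ge> 0" by (simp add: row_stochastic_def)
lemma rs_sum: "row_stochastic P \<Longrightarrow> (\<Sum>j\<in>UNIV. P$i$j) = 1" by (simp add: row_stochastic_def)

lemma tw_snoc: "x \<noteq> [] \<Longrightarrow> tw P (x @ [k]) = tw P x * P$(last x)$k"
  by (subst tw_append) auto

lemma mass: assumes "row_stochastic P" "x \<noteq> []"
  shows "lsum r (\<lambda>d. tw P (x @ d)) = tw P x"
  using assms(2)
proof (induction r arbitrary: x)
  case 0 then show ?case by simp
next
  case (Suc r)
  have "lsum (Suc r) (\<lambda>d. tw P (x @ d)) = (\<Sum>k\<in>UNIV. lsum r (\<lambda>d. tw P ((x @ [k]) @ d)))"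
    by (simp add: lsum_Suc)
  also have "\<dots> = (\<Sum>k\<in>UNIV. tw P (x @ [k]))"
    by (rule sum.cong[OF refl], rule Suc.IH) simp
  also have "\<dots> = (\<Sum>k\<in>UNIV. tw P x * P$(last x)$k)" using Suc.prems by (simp add: tw_snoc)
  also have "\<dots> = tw P x" using rs_sum[OF assms(1)] by (simp add: sum_distrib_left[symmetric])
  finally show ?case .
qed

lemma tw_pos_iff: "\<forall>i j. P$i$j \<ge> 0 \<Longrightarrow> tw P w > 0 \<longleftrightarrow> (\<forall>i. Suc i < length w \<longrightarrow> P$(w!i)$(w!Suc i) > 0)"
proof (induction P w rule: tw.induct)
  case (1 P a b w)
  have nn: "tw P (b # w) \<ge> 0" using 1(2) tw_nonneg by blast
  have "tw P (a#b#w) > 0 \<longleftrightarrow> P$a$b > 0 \<and> tw P (b#w) > 0"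
    using nn 1(2) by (simp add: zero_less_mult_iff)
  also have "\<dots> \<longleftrightarrow> (\<forall>i. Suc i < length (a#b#w) \<longrightarrow> P$((a#b#w)!i)$((a#b#w)!Suc i) > 0)"
    using 1 by (auto simp: less_Suc_eq_0_disj)
  finally show ?case .
qed auto

lemma tw_join: assumes "X \<noteq> []" "u \<noteq> []" "last X = hd u"
  shows "tw P (X @ tl u) = tw P X * tw P u"
  using assms
proof (induction P X rule: tw.induct)
  case (1 P a b w) then show ?case by simp
next
  case ("2_1" P) then show ?case by simp
next
  case ("2_2" P v) then show ?case by (cases u) auto
qed



definition occ :: "'n list \<Rightarrow> 'n list \<Rightarrow> nat \<Rightarrow> bool" where
  "occ u w i = (\<forall>k<length u. w!(i+k) = u!k)"
definition av :: "'n list \<Rightarrow> nat \<Rightarrow> 'n list \<Rightarrow> bool" where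
  "av u m w = (\<forall>i\<le>m. \<not> occ u w i)"
definition g :: "real^'n^'n \<Rightarrow> 'n list \<Rightarrow> nat \<Rightarrow> 'n \<Rightarrow> real" where
  "g P u m j = lsum (m + length u - 1) (\<lambda>w. if av u m (j#w) then tw P (j#w) else 0)"
definition G :: "real^'n^'n \<Rightarrow> 'n list \<Rightarrow> nat \<Rightarrow> real" where
  "G P u m = Max (range (g P u m))"

lemma occ_prefix: "i + length u \<le> length X \<Longrightarrow> occ u (X@Y) i = occ u X i"
  by (simp add: occ_def nth_append)
lemma occ_suffix: "occ u (X@Y) (length X + i) = occ u Y i"
  by (simp add: occ_def nth_append add.assoc)

lemma g_nonneg: "row_stochastic P \<Longrightarrow> 0 \<le> g P u m j"
  unfolding g_def by (rule lsum_nonneg) (simp add: tw_nonneg rs_nonneg)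

lemma g_le1: assumes "row_stochastic P" shows "g P u m j \<le> 1"
proof -
  have "g P u m j \<le> lsum (m + length u - 1) (\<lambda>w. tw P ([j] @ w))"
    unfolding g_def by (rule lsum_mono) (simp add: tw_nonneg rs_nonneg[OF assms])
  also have "\<dots> = 1" using mass[OF assms, of "[j]"] by simp
  finally show ?thesis .
qed

lemma g_le_G: "g P u m j \<le> G P u m"
  unfolding G_def by (rule Max_ge) auto

lemma G_attained: "\<exists>j. G P u m = g P u m j"
proof -
  have "G P u m \<in> range (g P u m)" unfolding G_def by (rule Max_in) auto
  then show ?thesis by auto
qed

lemma G_le1: "row_stochastic P \<Longrightarrow> G P u m \<le> 1"
  using G_attained g_le1 by metis

lemma G_nonneg: "row_stochastic P \<Longrightarrow> 0 \<le> G P u m"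
  using g_le_G g_nonneg order_trans by metis

lemma g_submult: assumes rs: "row_stochastic P" and L: "u \<noteq> []"
  shows "g P u (m+n+length u) j \<le> g P u m j * G P u n"
proof -
  let ?L = "length u"
  define F where "F w = (if av u (m+n+?L) (j#w) then tw P (j#w) else 0)" for w
  define X where "X a = (if av u m (j#a) then tw P (j#a) else 0)" for a
  define Y where "Y k b = (if av u n (k#b) then tw P (k#b) else 0)" for k b
  have L1: "?L \<ge> 1" using L by (cases u) auto
  have nnP: "\<forall>i j. P$i$j \<ge> 0" using rs_nonneg[OF rs] by blast
  have X0: "X a \<ge> 0" for a unfolding X_def using tw_nonneg[OF nnP] by simp
  have Y0: "Y k b \<ge> 0" for k b unfolding Y_def using tw_nonneg[OF nnP] by simp
  have pt: "F (a @ k # b) \<le> X a * P$(last (j#a))$k * Y k b"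
    if la: "length a = m + ?L - 1" and lb: "length b = n + ?L - 1" for a k b
  proof (cases "av u (m+n+?L) (j # a @ k # b)")
    case True
    have e: "j # a @ k # b = (j#a) @ (k#b)" by simp
    have lja: "length (j#a) = m + ?L" using la L1 by simp
    have avm: "av u m (j#a)"
      unfolding av_def
    proof (intro allI impI)
      fix i assume "i \<le> m"
      then have "\<not> occ u ((j#a) @ (k#b)) i" using True unfolding av_def e by auto
      moreover have "i + ?L \<le> length (j#a)" using \<open>i \<le> m\<close> lja by simp
      ultimately show "\<not> occ u (j#a) i" using occ_prefix by metis
    qed
    have avn: "av u n (k#b)"
      unfolding av_def
    proof (intro allI impI)
      fix i assume "i \<le> n"
      then have "\<not> occ u ((j#a) @ (k#b)) (length (j#a) + i)" using True lja unfolding av_def e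
        by (metis add.assoc add.commute add_le_cancel_left)
      then show "\<not> occ u (k#b) i" using occ_suffix by metis
    qed
    have "F (a @ k # b) = tw P ((j#a) @ (k#b))" unfolding F_def using True by simp
    also have "\<dots> = tw P (j#a) * P$(last (j#a))$k * tw P (k#b)" by (subst tw_append) auto
    finally show ?thesis unfolding X_def Y_def using avm avn by simp
  next
    case False
    then show ?thesis unfolding F_def using X0 Y0 nnP by simp
  qed
  have "g P u (m+n+?L) j = lsum ((m + ?L - 1) + Suc (n + ?L - 1)) F"
  proof -
    have "m + n + ?L + ?L - 1 = (m + ?L - 1) + Suc (n + ?L - 1)" using L1 by simp
    then show ?thesis unfolding g_def F_def by simp
  qed
  also have "\<dots> = lsum (m + ?L - 1) (\<lambda>a. \<Sum>k\<in>UNIV. lsum (n + ?L - 1) (\<lambda>b. F (a @ k # b)))"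
    by (subst lsum_append) (simp only: lsum_Suc)
  also have "\<dots> \<le> lsum (m + ?L - 1) (\<lambda>a. \<Sum>k\<in>UNIV. lsum (n + ?L - 1) (\<lambda>b. X a * P$(last (j#a))$k * Y k b))"
    by (intro lsum_mono sum_mono pt)
  also have "\<dots> = lsum (m + ?L - 1) (\<lambda>a. X a * (\<Sum>k\<in>UNIV. P$(last (j#a))$k * g P u n k))"
    unfolding g_def Y_def[abs_def] by (simp add: lsum_cmult sum_distrib_left mult.assoc)
  also have "\<dots> \<le> lsum (m + ?L - 1) (\<lambda>a. X a * G P u n)"
  proof (rule lsum_mono)
    fix a
    have "(\<Sum>k\<in>UNIV. P$(last (j#a))$k * g P u n k) \<le> (\<Sum>k\<in>UNIV. P$(last (j#a))$k * G P u n)"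
      by (intro sum_mono mult_left_mono g_le_G) (simp add: nnP)
    also have "\<dots> = G P u n" using rs_sum[OF rs] by (simp add: sum_distrib_right[symmetric])
    finally show "X a * (\<Sum>k\<in>UNIV. P$(last (j#a))$k * g P u n k) \<le> X a * G P u n"
      by (rule mult_left_mono) (rule X0)
  qed
  also have "\<dots> = g P u m j * G P u n"
    unfolding g_def X_def[abs_def] by (simp add: lsum_cmult mult.commute)
  finally show ?thesis .
qed

lemma G_submult: assumes rs: "row_stochastic P" and L: "u \<noteq> []"
  shows "G P u (m+n+length u) \<le> G P u m * G P u n"
proof -
  obtain j where "G P u (m+n+length u) = g P u (m+n+length u) j" using G_attained by blast
  also have "\<dots> \<le> g P u m j * G P u n" by (rule g_submult[OF rs L])
  also have "\<dots> \<le> G P u m * G P u n"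
    by (rule mult_right_mono[OF g_le_G G_nonneg[OF rs]])
  finally show ?thesis .
qed



lemma g_hit: assumes rs: "row_stochastic P" and L: "u \<noteq> []"
  and lc: "length c \<le> K + length u - 1" and oc: "occ u (j#c) k" and kK: "k \<le> K"
  and kl: "k + length u \<le> length (j#c)"
  shows "g P u K j \<le> 1 - tw P (j#c)"
proof -
  let ?n = "K + length u - 1"
  define r where "r = ?n - length c"
  have nr: "?n = length c + r" using lc unfolding r_def by simp
  define F where "F w = (if av u K (j#w) then tw P (j#w) else 0)" for w
  have nnP: "\<forall>i j. P$i$j \<ge> 0" using rs_nonneg[OF rs] by blast
  have pt: "F (a @ d) \<le> (if a = c then 0 else tw P ((j#a) @ d))" for a d
  proof (cases "a = c")
    case True
    have "occ u ((j#c) @ d) k" using occ_prefix[OF kl] oc by blast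
    then have "\<not> av u K (j # a @ d)" using True kK unfolding av_def by auto
    then show ?thesis unfolding F_def using True by simp
  next
    case False then show ?thesis unfolding F_def using tw_nonneg[OF nnP] by simp
  qed
  have "g P u K j = lsum (length c + r) F" unfolding g_def F_def nr[symmetric] by simp
  also have "\<dots> = lsum (length c) (\<lambda>a. lsum r (\<lambda>d. F (a @ d)))" by (rule lsum_append)
  also have "\<dots> \<le> lsum (length c) (\<lambda>a. lsum r (\<lambda>d. if a = c then 0 else tw P ((j#a) @ d)))"
    by (intro lsum_mono pt)
  also have "\<dots> = lsum (length c) (\<lambda>a. lsum r (\<lambda>d. tw P ((j#a) @ d)) - (if a = c then lsum r (\<lambda>d. tw P ((j#a) @ d)) else 0))"
    by (rule arg_cong[where f="lsum _"]) (auto simp: lsum_def)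
  also have "\<dots> = lsum (length c) (\<lambda>a. tw P ([j] @ a)) - tw P (j#c)"
  proof -
    have m1: "\<And>a. lsum r (\<lambda>d. tw P ((j#a) @ d)) = tw P (j#a)" by (rule mass[OF rs]) simp
    show ?thesis by (simp only: lsum_diff m1 lsum_delta[OF refl]) simp
  qed
  also have "\<dots> = 1 - tw P (j#c)" using mass[OF rs, of "[j]"] by simp
  finally show ?thesis .
qed

definition R :: "real^'n^'n \<Rightarrow> 'n \<Rightarrow> ('n \<Rightarrow> real) \<Rightarrow> nat \<Rightarrow> 'n \<Rightarrow> real" where
  "R P i vp n j = lsum n (\<lambda>w. if i \<notin> set (j#w) then tw P (j#w) * vp (last (j#w)) else 0)"

lemma R_0: "R P i vp 0 j = (if j = i then 0 else vp j)"
  by (simp add: R_def)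

lemma R_Suc: "R P i vp (Suc n) j = (if j = i then 0 else (\<Sum>k\<in>UNIV. P$j$k * R P i vp n k))"
proof -
  have "R P i vp (Suc n) j = (\<Sum>k\<in>UNIV. lsum n (\<lambda>w. (if j = i then 0 else P$j$k *
     (if i \<notin> set (k#w) then tw P (k#w) * vp (last (k#w)) else 0))))"
    unfolding R_def lsum_Suc by (intro sum.cong refl arg_cong[where f="lsum n"] ext) auto
  also have "\<dots> = (if j = i then 0 else (\<Sum>k\<in>UNIV. P$j$k * R P i vp n k))"
    by (simp add: R_def lsum_cmult lsum_def sum_distrib_left)
  finally show ?thesis .
qed

lemma R_lower: assumes rs: "row_stochastic P" and th: "\<theta> > 0"
  and vpi: "vp i = 0" and vp0: "\<And>j. vp j \<ge> 0"
  and key: "\<And>j. j \<noteq> i \<Longrightarrow> \<theta> * vp j \<le> (\<Sum>k\<in>UNIV. P$j$k * vp k)"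
  shows "R P i vp n j \<ge> \<theta>^n * vp j"
proof (induction n arbitrary: j)
  case 0 then show ?case using vpi by (simp add: R_0)
next
  case (Suc n)
  show ?case
  proof (cases "j = i")
    case True then show ?thesis using vpi by (simp add: R_Suc)
  next
    case False
    have "\<theta>^Suc n * vp j = \<theta>^n * (\<theta> * vp j)" by simp
    also have "\<dots> \<le> \<theta>^n * (\<Sum>k\<in>UNIV. P$j$k * vp k)"
      using key[OF False] th by (simp add: mult_left_mono)
    also have "\<dots> = (\<Sum>k\<in>UNIV. P$j$k * (\<theta>^n * vp k))" by (simp add: sum_distrib_left algebra_simps)
    also have "\<dots> \<le> (\<Sum>k\<in>UNIV. P$j$k * R P i vp n k)"
      by (intro sum_mono mult_left_mono Suc.IH) (simp add: rs_nonneg[OF rs])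
    finally show ?thesis using False by (simp add: R_Suc)
  qed
qed

lemma g_ge_R: assumes rs: "row_stochastic P" and L: "u \<noteq> []" and M: "M > 0"
  and vp0: "\<And>j. vp j \<ge> 0" and vpM: "\<And>j. vp j \<le> M"
  shows "g P u m j \<ge> R P (hd u) vp (m + length u - 1) j / M"
proof -
  have nnP: "\<forall>i j. P$i$j \<ge> 0" using rs_nonneg[OF rs] by blast
  have "R P (hd u) vp (m + length u - 1) j / M = lsum (m + length u - 1)
      (\<lambda>w. (if hd u \<notin> set (j#w) then tw P (j#w) * vp (last (j#w)) else 0) / M)"
    unfolding R_def lsum_def by (simp add: sum_divide_distrib)
  also have "\<dots> \<le> g P u m j" unfolding g_def
  proof (rule lsum_mono)
    fix w :: "'a list" assume lw: "length w = m + length u - 1"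
    show "(if hd u \<notin> set (j#w) then tw P (j#w) * vp (last (j#w)) else 0) / M
      \<le> (if av u m (j#w) then tw P (j#w) else 0)"
    proof (cases "hd u \<notin> set (j#w)")
      case True
      have "av u m (j#w)" unfolding av_def occ_def
      proof (intro allI impI notI)
        fix i assume im: "i \<le> m" and h: "\<forall>k<length u. (j # w) ! (i + k) = u ! k"
        have "(j#w) ! i = u ! 0" using h[rule_format, of 0] L by simp
        moreover have "i < length (j#w)" using im lw L by (cases u) auto
        ultimately have "hd u \<in> set (j#w)" using L by (metis hd_conv_nth nth_mem)
        then show False using True by simp
      qed
      moreover have "tw P (j#w) * vp (last (j#w)) / M \<le> tw P (j#w)"
      proof -
        have "vp (last (j#w)) / M \<le> 1" using vpM M by simp
        then have "tw P (j#w) * (vp (last (j#w)) / M) \<le> tw P (j#w) * 1"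
          by (intro mult_left_mono tw_nonneg[OF nnP])
        then show ?thesis by simp
      qed
      ultimately show ?thesis using True by simp
    next
      case False then show ?thesis using tw_nonneg[OF nnP] by simp
    qed
  qed
  finally show ?thesis .
qed



lemma fek_iter: assumes sub: "\<And>m n. d (m+n+L) \<le> d m + d n"
  shows "d (q*(m+L) + r) \<le> real q * d m + (d r :: real)"
proof (induction q)
  case 0 then show ?case by simp
next
  case (Suc q)
  have "Suc q * (m+L) + r = m + (q*(m+L)+r) + L" by simp
  then have "d (Suc q * (m+L) + r) \<le> d m + d (q*(m+L)+r)" using sub by metis
  then show ?case using Suc by (simp add: algebra_simps)
qed

lemma fek_upper: assumes sub: "\<And>m n. d (m+n+L) \<le> d m + d n" and np: "\<And>n. d n \<le> (0::real)"
  and L: "L \<ge> 1" and n: "n \<ge> 1"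
  shows "d n / real n \<le> d m / real (m+L) - d m / real n"
proof -
  define q where "q = n div (m+L)"
  define r where "r = n mod (m+L)"
  have nq: "n = q*(m+L) + r" unfolding q_def r_def by (rule div_mult_mod_eq[symmetric])
  have "d n \<le> real q * d m + d r" using fek_iter[OF sub] nq by metis
  also have "\<dots> \<le> real q * d m" using np[of r] by simp
  finally have dn: "d n \<le> real q * d m" .
  have "r < m + L" unfolding r_def using L by simp
  then have "real n \<le> real q * real (m+L) + real (m+L)" using nq
    by (metis add_le_mono le_refl less_imp_le of_nat_add of_nat_le_iff of_nat_mult)
  then have qb: "real q \<ge> real n / real (m+L) - 1" using L
    by (simp add: field_simps)
  have "real q * d m \<le> (real n / real (m+L) - 1) * d m"
    using qb np[of m] by (simp add: mult_right_mono_neg)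
  with dn have "d n \<le> (real n / real (m+L) - 1) * d m" by linarith
  then have "d n / real n \<le> (real n / real (m+L) - 1) * d m / real n"
    using n by (simp add: divide_right_mono)
  also have "\<dots> = d m / real (m+L) - d m / real n" using n by (simp add: field_simps)
  finally show ?thesis .
qed

lemma fekete_var: fixes d :: "nat \<Rightarrow> real"
  assumes sub: "\<And>m n. d (m+n+L) \<le> d m + d n" and np: "\<And>n. d n \<le> 0"
  and L: "L \<ge> 1" and low: "\<And>n. d n \<ge> a + real n * b"
  shows "\<exists>l. (\<lambda>n. d n / real n) \<longlonglongrightarrow> l \<and> (\<forall>m. l \<le> d m / real (m+L)) \<and> b \<le> l"
proof -
  define l where "l = Inf (range (\<lambda>m. d m / real (m+L)))"
  have lb: "d m / real (m+L) \<ge> min a 0 + min b 0" for m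
  proof -
    have pos: "real (m+L) \<ge> 1" using L by simp
    have "a / real (m+L) \<ge> min a 0"
    proof (cases "a \<ge> 0")
      case True then show ?thesis by simp
    next
      case False
      then have "a / real (m+L) \<ge> a / 1" using pos by (intro divide_left_mono_neg) auto
      then show ?thesis by simp
    qed
    moreover have "real m * b / real (m+L) \<ge> min b 0"
    proof (cases "b \<ge> 0")
      case True then show ?thesis by simp
    next
      case False
      have "real m \<le> real (m+L)" by simp
      then have "real m / real (m+L) \<le> 1" using pos by simp
      then have "real m / real (m+L) * b \<ge> 1 * b" using False by (intro mult_right_mono_neg) auto
      then show ?thesis using False by simp
    qed
    moreover have "d m / real (m+L) \<ge> (a + real m * b) / real (m+L)"
      using low[of m] pos by (simp add: divide_right_mono)
    ultimately show ?thesis by (simp add: add_divide_distrib)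
  qed
  have bdd: "bdd_below (range (\<lambda>m. d m / real (m+L)))"
    using lb by (intro bdd_belowI) auto
  have lm: "l \<le> d m / real (m+L)" for m unfolding l_def by (rule cInf_lower[OF _ bdd]) auto
  have conv: "(\<lambda>n. d n / real n) \<longlonglongrightarrow> l"
  proof (rule LIMSEQ_I)
    fix e :: real assume e: "e > 0"
    have "l < l + e/2" using e by simp
    then obtain m where m: "d m / real (m+L) < l + e/2"
    proof -
      have "\<exists>x\<in>range (\<lambda>m. d m / real (m+L)). x < l + e/2"
        using cInf_lessD[of "range (\<lambda>m. d m / real (m+L))" "l + e/2"] \<open>l < l + e/2\<close>
        unfolding l_def by blast
      then show ?thesis using that by blast
    qed
    obtain N1 :: nat where N1: "real N1 > (- d m) * 2 / e" using reals_Archimedean2 by blast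
    obtain N2 :: nat where N2: "real N2 > \<bar>l\<bar> * real L * 2 / e" using reals_Archimedean2 by blast
    show "\<exists>no. \<forall>n\<ge>no. norm (d n / real n - l) < e"
    proof (intro exI allI impI)
      fix n assume nn: "n \<ge> max 1 (max N1 N2)"
      then have n1: "n \<ge> 1" and nN1: "real n > (- d m) * 2 / e" and nN2: "real n > \<bar>l\<bar> * real L * 2 / e"
        using N1 N2 by auto
      have npos: "real n > 0" using n1 by simp
      have "- d m / real n < e/2"
        using nN1 npos e by (simp add: field_simps)
      then have up: "d n / real n < l + e"
        using fek_upper[OF sub np L n1, of m] m by linarith
      have "d n / real n = d n / real (n+L) * (real (n+L) / real n)" using npos L by simp
      also have "\<dots> \<ge> l * (real (n+L) / real n)"
        using lm[of n] npos by (intro mult_right_mono) auto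
      finally have "d n / real n \<ge> l + l * real L / real n" using npos by (simp add: field_simps)
      moreover have "\<bar>l * real L / real n\<bar> < e/2"
        using nN2 npos e by (simp add: abs_mult field_simps)
      ultimately have "d n / real n > l - e" by linarith
      then show "norm (d n / real n - l) < e" using up by simp
    qed
  qed
  have "b \<le> l"
  proof (rule LIMSEQ_le[OF _ conv])
    show "(\<lambda>n. a / real n + b) \<longlonglongrightarrow> b"
      using tendsto_add[OF lim_const_over_n[of a] tendsto_const[of b]] by simp
    show "\<exists>N. \<forall>n\<ge>N. a / real n + b \<le> d n / real n"
    proof (intro exI allI impI)
      fix n :: nat assume "n \<ge> 1"
      then have "a / real n + b = (a + real n * b) / real n" by (simp add: field_simps)
      also have "\<dots> \<le> d n / real n" using low[of n] by (simp add: divide_right_mono)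
      finally show "a / real n + b \<le> d n / real n" .
    qed
  qed
  then show ?thesis using conv lm by blast
qed



lemma mp_Suc: "mat_power A (Suc k) = mat_power A k ** A"
  by (simp add: mat_power_def)

lemma path_exists: assumes pa: "\<forall>i j. P$i$j > 0 \<longleftrightarrow> A$i$j = 1" and zo: "zero_one_matrix A"
  shows "mat_power A k $i$j > 0 \<Longrightarrow> \<exists>w. length w = k \<and> last (i#w) = j \<and> tw P (i#w) > 0"
proof (induction k arbitrary: j)
  case 0
  then have "i = j" by (simp add: mat_power_def mat_def split: if_splits)
  then show ?case by (intro exI[of _ "[]"]) simp
next
  case (Suc k)
  have "0 < (\<Sum>l\<in>UNIV. mat_power A k $i$l * A$l$j)"
    using Suc.prems by (simp add: mp_Suc matrix_matrix_mult_def)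
  then obtain l where l: "mat_power A k $i$l * A$l$j > 0"
    by (metis (no_types, lifting) not_le sum_nonpos)
  have Al: "A$l$j = 1" using l zo unfolding zero_one_matrix_def by (metis mult_zero_right less_irrefl)
  then have "mat_power A k $i$l > 0" using l by simp
  then obtain w where w: "length w = k" "last (i#w) = l" "tw P (i#w) > 0" using Suc.IH by blast
  have "tw P ((i#w) @ [j]) = tw P (i#w) * P$l$j" using tw_snoc[of "i#w" P j] w by simp
  moreover have "P$l$j > 0" using pa Al by blast
  ultimately have "tw P (i # w @ [j]) > 0" using w by simp
  then show ?case using w by (intro exI[of _ "w @ [j]"]) simp
qed

lemma path_exists': assumes pa: "\<forall>i j. P$i$j > 0 \<longleftrightarrow> A$i$j = 1" and zo: "zero_one_matrix A"
  and irr: "irreducible_matrix A"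
  shows "\<exists>w. last (i#w) = j \<and> tw P (i#w) > 0"
  using irr path_exists[OF pa zo] unfolding irreducible_matrix_def by blast

lemma stat_eq: assumes "stationary_vector P p" shows "p$j = (\<Sum>i\<in>UNIV. p$i * P$i$j)"
proof -
  have e: "p v* P = p" using assms unfolding stationary_vector_def by blast
  have "p$j = (p v* P)$j" by (simp only: e)
  also have "\<dots> = (\<Sum>i\<in>UNIV. p$i * P$i$j)" by (simp add: vector_matrix_mult_def)
  finally show ?thesis .
qed

lemma p_zero_back: assumes rs: "row_stochastic P" and st: "stationary_vector P p"
  shows "tw P (i#w) > 0 \<Longrightarrow> p$(last (i#w)) = 0 \<Longrightarrow> p$i = 0"
proof (induction w arbitrary: i)
  case Nil then show ?case by simp
next
  case (Cons k w)
  have nnP: "\<forall>i j. P$i$j \<ge> 0" using rs_nonneg[OF rs] by blast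
  have t: "tw P (i#k#w) = P$i$k * tw P (k#w)" by simp
  have tk: "tw P (k#w) \<ge> 0" using tw_nonneg[OF nnP] by blast
  have pos: "0 < P$i$k * tw P (k#w)" using Cons.prems(1) t by simp
  have a0: "P$i$k \<ge> 0" using nnP by blast
  have Pik: "P$i$k > 0" and tk': "tw P (k#w) > 0"
    using pos a0 tk unfolding zero_less_mult_iff by linarith+
  have pk: "p$k = 0" using Cons.IH[OF tk'] Cons.prems(2) by simp
  have p0: "\<forall>i. p$i \<ge> 0" using st unfolding stationary_vector_def by blast
  have "0 = (\<Sum>l\<in>UNIV. p$l * P$l$k)" using stat_eq[OF st, of k] pk by simp
  moreover have "p$i * P$i$k \<le> (\<Sum>l\<in>UNIV. p$l * P$l$k)"
    by (rule member_le_sum) (auto simp: p0 nnP)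
  ultimately have "p$i * P$i$k \<le> 0" by simp
  then show ?case using Pik p0 by (meson mult_le_0_iff not_le order_antisym)
qed

lemma p_pos: assumes rs: "row_stochastic P" and st: "stationary_vector P p"
  and pa: "\<forall>i j. P$i$j > 0 \<longleftrightarrow> A$i$j = 1" and zo: "zero_one_matrix A"
  and irr: "irreducible_matrix A"
  shows "p$j > 0"
proof (rule ccontr)
  assume "\<not> p$j > 0"
  then have pj: "p$j = 0" using st unfolding stationary_vector_def by (meson not_le order_antisym)
  have "p$i = 0" for i
  proof -
    obtain w where "last (i#w) = j" "tw P (i#w) > 0" using path_exists'[OF pa zo irr] by blast
    then show ?thesis using p_zero_back[OF rs st] pj by metis
  qed
  then have "(\<Sum>i\<in>UNIV. p$i) = 0" by simp
  then show False using st unfolding stationary_vector_def by simp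
qed

lemma eig_orth: assumes st: "stationary_vector P p" and ev: "P *v v = \<theta> *\<^sub>R v" and th: "\<theta> \<noteq> 1"
  shows "(\<Sum>j\<in>UNIV. p$j * v$j) = 0"
proof -
  have "\<theta> * (\<Sum>j\<in>UNIV. p$j * v$j) = (\<Sum>j\<in>UNIV. p$j * (\<theta> * v$j))"
    by (simp add: sum_distrib_left algebra_simps)
  also have "\<dots> = (\<Sum>j\<in>UNIV. p$j * (\<Sum>k\<in>UNIV. P$j$k * v$k))"
  proof (rule sum.cong[OF refl])
    fix j
    have "(P *v v)$j = (\<theta> *\<^sub>R v)$j" using ev by simp
    then show "p$j * (\<theta> * v$j) = p$j * (\<Sum>k\<in>UNIV. P$j$k * v$k)"
      by (simp add: matrix_vector_mult_def)
  qed
  also have "\<dots> = (\<Sum>j\<in>UNIV. \<Sum>k\<in>UNIV. p$j * P$j$k * v$k)"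
    by (simp only: sum_distrib_left mult.assoc)
  also have "\<dots> = (\<Sum>k\<in>UNIV. \<Sum>j\<in>UNIV. p$j * P$j$k * v$k)"
    by (rule sum.swap)
  also have "\<dots> = (\<Sum>k\<in>UNIV. (\<Sum>j\<in>UNIV. p$j * P$j$k) * v$k)"
    by (simp only: sum_distrib_right)
  also have "\<dots> = (\<Sum>k\<in>UNIV. p$k * v$k)" by (simp only: stat_eq[OF st, symmetric])
  finally have "(\<theta> - 1) * (\<Sum>j\<in>UNIV. p$j * v$j) = 0" by (simp add: algebra_simps)
  then show ?thesis using th by simp
qed



lemma succ_ex: assumes rs: "row_stochastic P" and pa: "\<forall>i j. P$i$j > 0 \<longleftrightarrow> A$i$j = 1"
  shows "\<exists>j. A$i$j = 1"
proof (rule ccontr)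
  assume "\<not> (\<exists>j. A$i$j = 1)"
  then have "\<forall>j. P$i$j = 0"
  proof (intro allI)
    fix j
    have "\<not> P$i$j > 0" using pa \<open>\<not> (\<exists>j. A$i$j = 1)\<close> by blast
    then show "P$i$j = 0" using rs_nonneg[OF rs, of i j] by linarith
  qed
  then show False using rs_sum[OF rs, of i] by simp
qed

lemma extend: assumes rs: "row_stochastic P" and pa: "\<forall>i j. P$i$j > 0 \<longleftrightarrow> A$i$j = 1"
  and w: "w \<noteq> []" "tw P w > 0"
  shows "\<exists>x. x \<in> cylinder A w"
proof -
  define s where "s i = (SOME j. A$i$j = 1)" for i
  have s: "A$i$(s i) = 1" for i unfolding s_def using someI_ex[OF succ_ex[OF rs pa]] by blast
  have nnP: "\<forall>i j. P$i$j \<ge> 0" using rs_nonneg[OF rs] by blast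
  have cons: "Suc i < length w \<Longrightarrow> A$(w!i)$(w!Suc i) = 1" for i
    using w(2) tw_pos_iff[OF nnP, of w] pa by blast
  define x where "x n = (if n < length w then w!n else (s^^(n - length w + 1)) (last w))" for n
  have "A$(x n)$(x (Suc n)) = 1" for n
  proof -
    consider "Suc n < length w" | "Suc n = length w" | "n \<ge> length w" by linarith
    then show ?thesis
    proof cases
      case 1 then show ?thesis using cons unfolding x_def by simp
    next
      case 2
      have "x n = w ! n" unfolding x_def using 2 by simp
      moreover have "n = length w - 1" using 2 by simp
      ultimately have "x n = last w" using last_conv_nth[OF w(1)] by simp
      moreover have "x (Suc n) = s (last w)" unfolding x_def using 2 by simp
      ultimately show ?thesis using s by simp
    next
      case 3
      then have "Suc n - length w + 1 = Suc (n - length w + 1)" by simp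
      then have "x (Suc n) = s (x n)" unfolding x_def using 3 by simp
      then show ?thesis using s by simp
    qed
  qed
  then have "x \<in> cylinder A w" unfolding cylinder_def shift_space_def x_def by simp
  then show ?thesis by blast
qed

lemma cyl_allowed: assumes "x \<in> cylinder A w" shows "allowed_word A w"
proof -
  have "x \<in> shift_space A" "\<forall>i<length w. x (0 + i) = w ! i" using assms unfolding cylinder_def by auto
  then show ?thesis unfolding allowed_word_def by blast
qed

lemma allowed_tw: assumes rs: "row_stochastic P" and pa: "\<forall>i j. P$i$j > 0 \<longleftrightarrow> A$i$j = 1"
  and a: "allowed_word A w"
  shows "tw P w > 0"
proof -
  have nnP: "\<forall>i j. P$i$j \<ge> 0" using rs_nonneg[OF rs] by blast
  obtain x k where x: "x \<in> shift_space A" "\<forall>i<length w. x (k + i) = w ! i"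
    using a unfolding allowed_word_def by blast
  have "P$(w!i)$(w!Suc i) > 0" if "Suc i < length w" for i
  proof -
    have "A$(x (k+i))$(x (Suc (k+i))) = 1" using x(1) unfolding shift_space_def by blast
    then have "A$(w!i)$(w!Suc i) = 1" using x(2) that
      by (metis Suc_lessD add_Suc_right)
    then show ?thesis using pa by blast
  qed
  then show ?thesis using tw_pos_iff[OF nnP] by blast
qed

lemma shift_pow: "(shift ^^ i) x = (\<lambda>n. x (n + i))"
  by (induction i arbitrary: x) (auto simp: shift_def funpow_Suc_right)



abbreviation "PM \<equiv> (Pi\<^sub>M UNIV (\<lambda>_. count_space UNIV)) :: (nat \<Rightarrow> 'n::finite) measure"

lemma spPM: "space PM = UNIV" by (simp add: space_PiM)

lemma cyl_meas: "cylinder A w \<in> sets PM"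
proof -
  have "{x\<in>space PM. (\<forall>n. A$(x n)$(x (Suc n)) = 1) \<and> (\<forall>i<length w. x i = w!i)} \<in> sets PM"
    by measurable
  then show ?thesis by (simp add: spPM cylinder_def shift_space_def)
qed

lemma Om_meas: "shift_space A \<in> sets PM"
proof -
  have "{x\<in>space PM. (\<forall>n. A$(x n)$(x (Suc n)) = 1)} \<in> sets PM"
    by measurable
  then show ?thesis by (simp add: spPM shift_space_def)
qed

lemma surv_eq: "survivors (cylinder A u) m =
  {x. \<forall>i\<le>m. \<not> ((\<forall>n. A$(x (n+i))$(x (Suc n + i)) = 1) \<and> (\<forall>k<length u. x (k+i) = u!k))}"
  unfolding survivors_def shift_pow cylinder_def shift_space_def by auto

lemma surv_meas: "survivors (cylinder A u) m \<in> sets PM"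
proof -
  have "{x\<in>space PM. \<forall>i\<le>m. \<not> ((\<forall>n. A$(x (n+i))$(x (Suc n + i)) = 1) \<and> (\<forall>k<length u. x (k+i) = u!k))} \<in> sets PM"
    by measurable
  then show ?thesis by (simp add: spPM surv_eq)
qed



lemma cyl_disj: assumes "length w = length w'" "w \<noteq> w'" shows "cylinder A w \<inter> cylinder A w' = {}"
proof (rule ccontr)
  assume "cylinder A w \<inter> cylinder A w' \<noteq> {}"
  then obtain x where "x \<in> cylinder A w" "x \<in> cylinder A w'" by blast
  then have "\<forall>i<length w. w!i = w'!i" using assms(1) unfolding cylinder_def by auto
  then have "w = w'" using assms(1) by (simp add: nth_equalityI)
  then show False using assms(2) by simp
qed

lemma link:
  fixes A P :: "real^'n^'n" and p :: "real^'n" and \<mu> :: "(nat \<Rightarrow> 'n) measure"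
  assumes rs: "row_stochastic P" and pa: "\<forall>i j. P$i$j > 0 \<longleftrightarrow> A$i$j = 1"
    and mu: "is_markov_measure A P p \<mu>" and st: "stationary_vector P p" and L: "u \<noteq> []"
  shows "measure \<mu> (survivors (cylinder A u) m) = (\<Sum>j\<in>UNIV. p$j * g P u m j)"
proof -
  have ps: "prob_space \<mu>" and sets: "sets \<mu> = sets PM"
    and cw: "\<And>w. w \<noteq> [] \<Longrightarrow> allowed_word A w \<Longrightarrow> measure \<mu> (cylinder A w) = markov_weight P p w"
    using mu unfolding is_markov_measure_def by auto
  interpret prob_space \<mu> by (rule ps)
  have space: "space \<mu> = UNIV" using sets_eq_imp_space_eq[OF sets] spPM by simp
  let ?O = "shift_space A"
  let ?S = "survivors (cylinder A u) m"
  let ?L = "length u"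
  have Om: "?O \<in> sets \<mu>" using Om_meas sets by blast
  have cm: "\<And>w. cylinder A w \<in> sets \<mu>" using cyl_meas sets by blast
  have Sm: "?S \<in> sets \<mu>" using surv_meas sets by blast
  have nnP: "\<forall>i j. P$i$j \<ge> 0" using rs_nonneg[OF rs] by blast
  have mcyl: "measure \<mu> (cylinder A w) = p$(hd w) * tw P w" if "w \<noteq> []" for w
  proof (cases "allowed_word A w")
    case True
    then show ?thesis using cw[OF that True] that unfolding markov_weight_def tw_prod
      by (simp add: hd_conv_nth)
  next
    case False
    then have e: "cylinder A w = {}" using cyl_allowed by blast
    have "\<not> tw P w > 0" using extend[OF rs pa that] cyl_allowed False by blast
    then have "tw P w = 0" using tw_nonneg[OF nnP, of w] by simp
    then show ?thesis using e by simp
  qed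
  have O1: "measure \<mu> ?O = 1"
  proof -
    have e: "?O = (\<Union>j\<in>UNIV. cylinder A [j])" unfolding cylinder_def by auto
    have d: "disjoint_family_on (\<lambda>j. cylinder A [j]) UNIV"
      unfolding disjoint_family_on_def using cyl_disj[of "[_]" "[_]" A] by auto
    have "measure \<mu> ?O = (\<Sum>j\<in>UNIV. measure \<mu> (cylinder A [j]))"
      unfolding e by (rule finite_measure_finite_Union) (use cm d in auto)
    also have "\<dots> = (\<Sum>j\<in>UNIV. p$j)" using mcyl by simp
    also have "\<dots> = 1" using st unfolding stationary_vector_def by simp
    finally show ?thesis .
  qed
  have SO: "measure \<mu> ?S = measure \<mu> (?S \<inter> ?O)"
  proof -
    have c: "space \<mu> - ?O \<in> sets \<mu>" by (rule sets.compl_sets[OF Om])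
    have sub: "?S - ?O \<subseteq> space \<mu> - ?O" unfolding space by blast
    have "measure \<mu> (?S - ?O) \<le> measure \<mu> (space \<mu> - ?O)"
      by (rule finite_measure_mono[OF sub c])
    also have "\<dots> = 0" using prob_compl[OF Om] O1 by simp
    finally have "measure \<mu> (?S - ?O) = 0" using measure_nonneg[of \<mu> "?S - ?O"] by linarith
    then show ?thesis using finite_measure_Diff'[OF Sm Om] by simp
  qed
  define W where "W = {w. length w = m + ?L \<and> av u m w}"
  have fW: "finite W" unfolding W_def using finite_len[of "m + ?L"] by (rule rev_finite_subset) auto
  have SOe: "?S \<inter> ?O = (\<Union>w\<in>W. cylinder A w)"
  proof (intro equalityI subsetI)
    fix x assume x: "x \<in> ?S \<inter> ?O"
    define w where "w = map x [0..<m + ?L]"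
    have "av u m w" unfolding av_def
    proof (intro allI impI notI)
      fix i assume i: "i \<le> m" and o: "occ u w i"
      have "\<forall>k<?L. x (k+i) = u!k" using o i unfolding occ_def w_def by (simp add: add.commute)
      then have "(shift ^^ i) x \<in> cylinder A u" using x unfolding shift_pow cylinder_def shift_space_def
        by (simp add: add.commute)
      then show False using x i unfolding survivors_def by blast
    qed
    then have "w \<in> W" unfolding W_def w_def by simp
    moreover have "x \<in> cylinder A w" using x unfolding cylinder_def w_def by auto
    ultimately show "x \<in> (\<Union>w\<in>W. cylinder A w)" by blast
  next
    fix x assume "x \<in> (\<Union>w\<in>W. cylinder A w)"
    then obtain w where w: "w \<in> W" "x \<in> cylinder A w" by blast
    have xO: "x \<in> ?O" using w(2) unfolding cylinder_def by simp
    have "x \<in> ?S" unfolding survivors_def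
    proof (intro CollectI allI impI notI)
      fix i assume i: "i \<le> m" and c: "(shift ^^ i) x \<in> cylinder A u"
      have "\<forall>k<?L. x (k+i) = u!k" using c unfolding shift_pow cylinder_def by simp
      moreover have "\<forall>k<?L. w!(i+k) = x (k+i)" using w i unfolding W_def cylinder_def by (auto simp: add.commute)
      ultimately have "occ u w i" unfolding occ_def by simp
      then show False using w(1) i unfolding W_def av_def by blast
    qed
    then show "x \<in> ?S \<inter> ?O" using xO by blast
  qed
  have "measure \<mu> (?S \<inter> ?O) = (\<Sum>w\<in>W. measure \<mu> (cylinder A w))"
    unfolding SOe
  proof (rule finite_measure_finite_Union[OF fW])
    show "(\<lambda>w. cylinder A w) ` W \<subseteq> sets \<mu>" using cm by blast
    show "disjoint_family_on (\<lambda>w. cylinder A w) W"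
      unfolding disjoint_family_on_def by (intro ballI impI cyl_disj) (auto simp: W_def)
  qed
  also have "\<dots> = (\<Sum>w\<in>W. p$(hd w) * tw P w)"
  proof (rule sum.cong[OF refl])
    fix w assume "w \<in> W" then have "w \<noteq> []" using L unfolding W_def by auto
    then show "measure \<mu> (cylinder A w) = p$(hd w) * tw P w" by (rule mcyl)
  qed
  also have "\<dots> = lsum (m + ?L) (\<lambda>w. if av u m w then p$(hd w) * tw P w else 0)"
  proof -
    have "W = {w \<in> {w. length w = m + ?L}. av u m w}" unfolding W_def by auto
    then show ?thesis unfolding lsum_def by (simp only: sum.inter_filter[OF finite_len])
  qed
  also have "\<dots> = lsum (Suc (m + ?L - 1)) (\<lambda>w. if av u m w then p$(hd w) * tw P w else 0)"
    using L by (cases u) auto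
  also have "\<dots> = (\<Sum>j\<in>UNIV. lsum (m + ?L - 1) (\<lambda>w. p$j * (if av u m (j#w) then tw P (j#w) else 0)))"
    unfolding lsum_Suc by (intro sum.cong refl arg_cong[where f="lsum _"] ext) simp
  also have "\<dots> = (\<Sum>j\<in>UNIV. p$j * g P u m j)" unfolding g_def lsum_cmult by simp
  finally show ?thesis using SO by simp
qed



theorem theorem3p4:
  fixes A P :: "real^'n^'n" and p :: "real^'n" and \<mu> :: "(nat \<Rightarrow> 'n) measure"
    and \<theta> :: real and u :: "'n list"
  assumes "zero_one_matrix A" and "irreducible_matrix A"
    and "row_stochastic P" and "\<forall>i j. P$i$j > 0 \<longleftrightarrow> A$i$j = 1"
    and "stationary_vector P p"
    and "is_markov_measure A P p \<mu>"
    and "real_eigenvalue P \<theta>" and "\<theta> > 0" and "\<theta> \<noteq> 1"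
    and "\<forall>t. real_eigenvalue P t \<and> t > 0 \<and> t \<noteq> 1 \<longrightarrow> t \<le> \<theta>"
    and "u \<noteq> []" and "allowed_word A u"
  shows "\<exists>\<rho>. (\<lambda>m. - ln (measure \<mu> (survivors (cylinder A u) m)) / real m) \<longlonglongrightarrow> \<rho>
             \<and> 0 < \<rho> \<and> \<rho> \<le> - ln \<theta>"
proof -
  note zo = assms(1) and irr = assms(2) and rs = assms(3) and pa = assms(4) and st = assms(5)
    and mu = assms(6) and ev = assms(7) and th = assms(8) and th1 = assms(9) and L = assms(11)
    and al = assms(12)
  let ?L = "length u"
  let ?i = "hd u"
  have L1: "?L \<ge> 1" using L by (cases u) auto
  have nnP: "\<forall>i j. P$i$j \<ge> 0" using rs_nonneg[OF rs] by blast
  have ppos: "\<And>j. p$j > 0" using p_pos[OF rs st pa zo irr] by blast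
  define pmin where "pmin = Min (range (\<lambda>j. p$j))"
  have pmin: "pmin > 0" "\<And>j. pmin \<le> p$j"
    unfolding pmin_def using ppos by (auto intro: Min_in)
  obtain v where v: "v \<noteq> 0" "P *v v = \<theta> *\<^sub>R v" using ev unfolding real_eigenvalue_def by blast
  have orth: "(\<Sum>j\<in>UNIV. p$j * v$j) = 0" by (rule eig_orth[OF st v(2) th1])
  have evc: "(\<Sum>k\<in>UNIV. P$j$k * v$k) = \<theta> * v$j" for j
  proof -
    have "(P *v v)$j = (\<theta> *\<^sub>R v)$j" using v(2) by simp
    then show ?thesis by (simp add: matrix_vector_mult_def)
  qed
  define s :: real where "s = (if v$?i \<le> 0 then 1 else -1)"
  define ww where "ww j = s * v$j" for j
  have s0: "s \<noteq> 0" unfolding s_def by simp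
  have wwi: "ww ?i \<le> 0" unfolding ww_def s_def by simp
  have wwo: "(\<Sum>j\<in>UNIV. p$j * ww j) = 0"
  proof -
    have "(\<Sum>j\<in>UNIV. p$j * (s * v$j)) = s * (\<Sum>j\<in>UNIV. p$j * v$j)"
      by (simp add: sum_distrib_left algebra_simps)
    then show ?thesis unfolding ww_def using orth by simp
  qed
  have wwe: "(\<Sum>k\<in>UNIV. P$j$k * ww k) = \<theta> * ww j" for j
  proof -
    have "(\<Sum>k\<in>UNIV. P$j$k * (s * v$k)) = s * (\<Sum>k\<in>UNIV. P$j$k * v$k)"
      by (simp add: sum_distrib_left algebra_simps)
    then show ?thesis unfolding ww_def using evc[of j] by simp
  qed
  have "\<exists>j. v$j \<noteq> 0" using v(1) by (metis vec_eq_iff zero_index)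
  then have wnz: "\<exists>j. ww j \<noteq> 0" unfolding ww_def using s0 by auto
  obtain j0 where j0: "ww j0 > 0"
  proof (rule ccontr)
    assume "\<not> thesis"
    then have le: "\<forall>j. ww j \<le> 0" using that by (meson not_le)
    have "\<forall>j\<in>UNIV. - (p$j * ww j) = 0"
    proof (rule sum_nonneg_eq_0_iff[THEN iffD1])
      show "finite (UNIV :: 'n set)" by simp
      show "\<And>x. x \<in> UNIV \<Longrightarrow> 0 \<le> - (p$x * ww x)" using le ppos by (simp add: mult_nonneg_nonpos less_imp_le)
      show "(\<Sum>j\<in>UNIV. - (p$j * ww j)) = 0" using wwo by (simp add: sum_negf)
    qed
    then have "\<forall>j. ww j = 0" using ppos by (simp add: less_irrefl) (metis less_irrefl)
    then show False using wnz by blast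
  qed
  define vp where "vp j = max (ww j) 0" for j
  have vp0: "\<And>j. vp j \<ge> 0" unfolding vp_def by simp
  have vpi: "vp ?i = 0" unfolding vp_def using wwi by simp
  have key: "\<theta> * vp j \<le> (\<Sum>k\<in>UNIV. P$j$k * vp k)" if "j \<noteq> ?i" for j
  proof -
    have "(\<Sum>k\<in>UNIV. P$j$k * ww k) \<le> (\<Sum>k\<in>UNIV. P$j$k * vp k)"
      by (intro sum_mono mult_left_mono) (auto simp: vp_def nnP)
    moreover have "0 \<le> (\<Sum>k\<in>UNIV. P$j$k * vp k)" by (intro sum_nonneg) (simp add: nnP vp0)
    moreover have "\<theta> * vp j = max (\<theta> * ww j) 0" unfolding vp_def using th
      by (simp add: max_def mult_le_0_iff)
    ultimately show ?thesis using wwe[of j] by simp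
  qed
  define Mx where "Mx = Max (range vp)"
  have vpM: "\<And>j. vp j \<le> Mx" unfolding Mx_def by (rule Max_ge) auto
  have vpj0: "vp j0 > 0" unfolding vp_def using j0 by simp
  have Mpos: "Mx > 0" using vpM[of j0] vpj0 by simp
  define c where "c = vp j0 / Mx"
  have c: "c > 0" "c \<le> 1" unfolding c_def using vpM[of j0] vpj0 Mpos by auto
  have Glow: "G P u m \<ge> c * \<theta>^(m + ?L - 1)" for m
  proof -
    have "c * \<theta>^(m + ?L - 1) = \<theta>^(m + ?L - 1) * vp j0 / Mx" unfolding c_def by simp
    also have "\<dots> \<le> R P ?i vp (m + ?L - 1) j0 / Mx"
      using R_lower[OF rs th vpi vp0 key] Mpos by (simp add: divide_right_mono)
    also have "\<dots> \<le> g P u m j0" by (rule g_ge_R[OF rs L Mpos vp0 vpM])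
    also have "\<dots> \<le> G P u m" by (rule g_le_G)
    finally show ?thesis .
  qed
  have Gpos: "G P u m > 0" for m using Glow[of m] c th by (smt (verit) zero_less_power mult_pos_pos)
  define d where "d m = ln (G P u m)" for m
  have dnp: "d m \<le> 0" for m unfolding d_def using Gpos[of m] G_le1[OF rs] by simp
  have dsub: "d (m+n+?L) \<le> d m + d n" for m n
  proof -
    have "ln (G P u (m+n+?L)) \<le> ln (G P u m * G P u n)"
      using G_submult[OF rs L] Gpos by (simp add: mult_pos_pos)
    moreover have "ln (G P u m * G P u n) = ln (G P u m) + ln (G P u n)"
      using Gpos[of m] Gpos[of n] by (simp add: ln_mult)
    ultimately show ?thesis unfolding d_def by simp
  qed
  have dlow: "d m \<ge> (ln c - ln \<theta>) + real m * ln \<theta> + real ?L * ln \<theta>" for m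
  proof -
    have "ln (c * \<theta>^(m + ?L - 1)) \<le> d m"
      unfolding d_def using Glow[of m] c th by (intro ln_mono) (auto intro: mult_pos_pos)
    moreover have "ln (c * \<theta>^(m + ?L - 1)) = ln c + real (m + ?L - 1) * ln \<theta>"
      using c th by (simp add: ln_mult ln_realpow)
    moreover have "real (m + ?L - 1) = real m + real ?L - 1" using L1 by simp
    ultimately show ?thesis by (simp add: algebra_simps)
  qed
  obtain l where l: "(\<lambda>n. d n / real n) \<longlonglongrightarrow> l" "\<forall>m. l \<le> d m / real (m + ?L)" "ln \<theta> \<le> l"
    using fekete_var[of d ?L "ln c - ln \<theta> + real ?L * ln \<theta>" "ln \<theta>"] dsub dnp L1 dlow
    by (auto simp: algebra_simps)
  have "\<exists>w. last (j#w) = ?i \<and> tw P (j#w) > 0" for j by (rule path_exists'[OF pa zo irr])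
  then obtain wf where wf: "\<And>j. last (j # wf j) = ?i" "\<And>j. tw P (j # wf j) > 0" by metis
  define K where "K = Max (range (\<lambda>j. length (wf j)))"
  have Kj: "length (wf j) \<le> K" for j unfolding K_def by (rule Max_ge) auto
  have twu: "tw P u > 0" by (rule allowed_tw[OF rs pa al])
  have hit: "g P u K j < 1" for j
  proof -
    define y where "y = (j # wf j) @ tl u"
    have yc: "y = j # (wf j @ tl u)" unfolding y_def by simp
    have ty: "tw P y > 0" unfolding y_def using tw_join[of "j # wf j" u P] wf L twu
      by (simp add: mult_pos_pos)
    have ly: "length y = length (wf j) + ?L" unfolding y_def using L1 by simp
    have oc: "occ u y (length (wf j))" unfolding occ_def
    proof (intro allI impI)
      fix k assume k: "k < ?L"
      show "y ! (length (wf j) + k) = u ! k"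
      proof (cases k)
        case 0
        have "y ! length (wf j) = (j # wf j) ! length (wf j)"
          using nth_append[of "j # wf j" "tl u" "length (wf j)"] unfolding y_def by simp
        also have "\<dots> = last (j # wf j)" by (simp add: last_conv_nth)
        also have "\<dots> = u ! 0" using wf(1) L by (simp add: hd_conv_nth)
        finally show ?thesis using 0 by simp
      next
        case (Suc k')
        have "y ! (length (wf j) + k) = tl u ! k'" unfolding y_def using Suc by (simp add: nth_append)
        also have "\<dots> = u ! k" using Suc L by (cases u) auto
        finally show ?thesis .
      qed
    qed
    have "g P u K j \<le> 1 - tw P (j # (wf j @ tl u))"
    proof (rule g_hit[OF rs L])
      show "length (wf j @ tl u) \<le> K + ?L - 1" using Kj[of j] L1 by simp
      show "occ u (j # (wf j @ tl u)) (length (wf j))" using oc yc by simp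
      show "length (wf j) \<le> K" by (rule Kj)
      show "length (wf j) + ?L \<le> length (j # (wf j @ tl u))" using ly yc by simp
    qed
    then show ?thesis using ty yc by simp
  qed
  have dK: "d K < 0"
  proof -
    obtain j where "G P u K = g P u K j" using G_attained by blast
    then have "G P u K < 1" using hit by simp
    then show ?thesis unfolding d_def using Gpos[of K] by simp
  qed
  have lneg: "l < 0"
  proof -
    have "l \<le> d K / real (K + ?L)" using l(2) by blast
    also have "\<dots> < 0" using dK L1 by (simp add: divide_neg_pos)
    finally show ?thesis .
  qed
  define a where "a m = measure \<mu> (survivors (cylinder A u) m)" for m
  have aeq: "a m = (\<Sum>j\<in>UNIV. p$j * g P u m j)" for m unfolding a_def by (rule link[OF rs pa mu st L])
  have aup: "a m \<le> G P u m" for m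
  proof -
    have "a m \<le> (\<Sum>j\<in>UNIV. p$j * G P u m)"
      unfolding aeq by (intro sum_mono mult_left_mono g_le_G) (simp add: less_imp_le ppos)
    also have "\<dots> = G P u m" using st unfolding stationary_vector_def by (simp add: sum_distrib_right[symmetric])
    finally show ?thesis .
  qed
  have alow: "a m \<ge> pmin * G P u m" for m
  proof -
    obtain j where j: "G P u m = g P u m j" using G_attained by blast
    have "pmin * G P u m \<le> p$j * g P u m j" unfolding j
      by (intro mult_right_mono pmin(2) g_nonneg[OF rs])
    also have "\<dots> \<le> (\<Sum>j\<in>UNIV. p$j * g P u m j)"
      by (rule member_le_sum) (auto intro: mult_nonneg_nonneg less_imp_le ppos g_nonneg[OF rs])
    finally show ?thesis unfolding aeq .
  qed
  have apos: "a m > 0" for m using alow[of m] pmin Gpos[of m] by (smt (verit) mult_pos_pos)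
  define e where "e m = ln (a m) - d m" for m
  have eb: "\<bar>e m\<bar> \<le> - ln pmin" for m
  proof -
    have "ln (a m) \<le> d m" unfolding d_def using aup[of m] apos[of m] by simp
    moreover have "ln pmin + d m \<le> ln (a m)"
    proof -
      have "ln (pmin * G P u m) \<le> ln (a m)"
        using alow[of m] pmin Gpos[of m] by (intro ln_mono) (auto intro: mult_pos_pos)
      moreover have "ln (pmin * G P u m) = ln pmin + ln (G P u m)" using pmin Gpos[of m] by (simp add: ln_mult)
      ultimately show ?thesis unfolding d_def by simp
    qed
    ultimately show ?thesis unfolding e_def by linarith
  qed
  have e0: "(\<lambda>m. e m / real m) \<longlonglongrightarrow> 0"
  proof (rule Lim_null_comparison)
    show "\<forall>\<^sub>F m in sequentially. norm (e m / real m) \<le> - ln pmin / real m"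
    proof (intro always_eventually allI)
      fix m
      have "\<bar>e m\<bar> / real m \<le> - ln pmin / real m" using eb[of m] by (rule divide_right_mono) simp
      then show "norm (e m / real m) \<le> - ln pmin / real m" by (simp add: abs_divide)
    qed
    show "(\<lambda>m. - ln pmin / real m) \<longlonglongrightarrow> 0" by (rule lim_const_over_n)
  qed
  have conv: "(\<lambda>m. - ln (a m) / real m) \<longlonglongrightarrow> - l"
  proof -
    have "(\<lambda>m. - (d m / real m) - e m / real m) \<longlonglongrightarrow> - l - 0"
      by (intro tendsto_diff tendsto_minus l(1) e0)
    moreover have "(\<lambda>m. - (d m / real m) - e m / real m) = (\<lambda>m. - ln (a m) / real m)"
      unfolding e_def by (rule ext) (simp add: diff_divide_distrib)
    ultimately show ?thesis by simp
  qed
  show ?thesis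
    using conv lneg l(3) unfolding a_def by (intro exI[of _ "- l"]) auto
qed

end
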